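(* Let $N=\{p\in(\mathbf{R}^3)^4: p_4=0,\ \|p\|=1\}$ (the space of tetrahedra $p=(p_1,p_2,p_3,p_4)$ modulo translation and positive scaling) and let $Y$ be the vector field on $N$ given by $Y_p=D(\pi)_p(\nabla\operatorname{vol}_p)$, where $\operatorname{vol}(p)=\frac16((p_2-p_1)\times(p_3-p_1))\cdot(p_4-p_1)$. If $p\in N$ is a singularity of $Y$ (i.e. $Y_p=0$) and $p_1,p_2,p_3,p_4$ are not collinear, then $p$ is a regular tetrahedron, i.e. all six distances $\|p_i-p_j\|$, $i\neq j$, are equal.
   Context: $\tau(p_1,\ldots,p_4)=(p_1-p_4,p_2-p_4,p_3-p_4,0)$, $\sigma(p)=p/\|p\|$, $\pi=\sigma\circ\tau$, defined on $(\mathbf{R}^3)^4$ minus the configurations with all $p_i$ equal; $D(\pi)$ is its differential and $\nabla$ is the Euclidean gradient on $\mathbf{R}^{12}$. *)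

theory Defs
  imports "HOL-Analysis.Analysis"
begin

text \<open>Tetrahedra p = (p1,p2,p3,p4) are elements of real^3^4 (index type 4 with
  elements 1,2,3,4, where 4 = 0 in the numeral type). The norm on real^3^4 is the
  Euclidean norm of R^12.\<close>

definition tvol :: "real^3^4 \<Rightarrow> real" where
  "tvol p = (1/6) * (cross3 (p$2 - p$1) (p$3 - p$1) \<bullet> (p$4 - p$1))"

definition ttau :: "real^3^4 \<Rightarrow> real^3^4" where
  "ttau p = (\<chi> i. if i = 4 then 0 else p$i - p$4)"

definition tsigma :: "real^3^4 \<Rightarrow> real^3^4" where
  "tsigma p = p /\<^sub>R norm p"

definition tpi :: "real^3^4 \<Rightarrow> real^3^4" where
  "tpi = tsigma \<circ> ttau"

definition tN :: "(real^3^4) set" where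
  "tN = {p. p$4 = 0 \<and> norm p = 1}"

definition regular_tetrahedron :: "real^3^4 \<Rightarrow> bool" where
  "regular_tetrahedron p \<longleftrightarrow>
     (\<forall>i j k l. i \<noteq> j \<longrightarrow> k \<noteq> l \<longrightarrow> dist (p$i) (p$j) = dist (p$k) (p$l))"

end

theory Submission
  imports Defs
begin

lemma bb_cross: "bounded_bilinear cross3"
  using bilinear_cross bilinear_conv_bounded_bilinear by blast

lemma lin_nth: "bounded_linear (\<lambda>h::real^3^4. h$i)"
  by (rule bounded_linear_vec_nth)

lemma tvol_deriv:
  "(tvol has_derivative (\<lambda>h. (1/6) * ((cross3 (h$2-h$1) (p$3-p$1) + cross3 (p$2-p$1) (h$3-h$1)) \<bullet> (p$4-p$1) + cross3 (p$2-p$1) (p$3-p$1) \<bullet> (h$4-h$1)))) (at p)"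
proof -
  have d: "\<And>i j. ((\<lambda>q::real^3^4. q$i - q$j) has_derivative (\<lambda>h. h$i - h$j)) (at p)"
    by (intro derivative_intros bounded_linear_imp_has_derivative bounded_linear_vec_nth)
  have c: "((\<lambda>q. cross3 (q$2-q$1) (q$3-q$1)) has_derivative (\<lambda>h. cross3 (p$2-p$1) (h$3-h$1) + cross3 (h$2-h$1) (p$3-p$1))) (at p)"
    using bounded_bilinear.FDERIV[OF bb_cross d d] by simp
  have "((\<lambda>q. cross3 (q$2-q$1) (q$3-q$1) \<bullet> (q$4-q$1)) has_derivative (\<lambda>h. cross3 (p$2-p$1) (p$3-p$1) \<bullet> (h$4-h$1) + (cross3 (p$2-p$1) (h$3-h$1) + cross3 (h$2-h$1) (p$3-p$1)) \<bullet> (p$4-p$1))) (at p)"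
    using bounded_bilinear.FDERIV[OF bounded_bilinear_inner c d] by simp
  then have "((\<lambda>q. (1/6) * (cross3 (q$2-q$1) (q$3-q$1) \<bullet> (q$4-q$1))) has_derivative (\<lambda>h. (1/6) * (cross3 (p$2-p$1) (p$3-p$1) \<bullet> (h$4-h$1) + (cross3 (p$2-p$1) (h$3-h$1) + cross3 (h$2-h$1) (p$3-p$1)) \<bullet> (p$4-p$1)))) (at p)"
    by (rule has_derivative_mult_right)
  then show ?thesis unfolding tvol_def[abs_def] by (simp add: algebra_simps)
qed

lemma ttau_lin: "bounded_linear ttau"
  unfolding ttau_def
  apply (rule bounded_linearI')
  by (auto simp: vec_eq_iff algebra_simps)

lemma tsigma_deriv:
  assumes "norm q = 1"
  shows "(tsigma has_derivative (\<lambda>h. h - (q \<bullet> h) *\<^sub>R q)) (at q)"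
proof -
  have q0: "q \<noteq> 0" using assms by auto
  have n: "(norm has_derivative (\<lambda>h. h \<bullet> sgn q)) (at q)"
    using has_derivative_norm[OF q0] .
  have i: "((\<lambda>x. inverse (norm x)) has_derivative (\<lambda>h. - (inverse (norm q) * (h \<bullet> sgn q) * inverse (norm q)))) (at q)"
    using Deriv.has_derivative_inverse[of norm q, OF _ n] q0 by simp
  have "((\<lambda>x. inverse (norm x) *\<^sub>R x) has_derivative (\<lambda>h. inverse (norm q) *\<^sub>R h + (- (inverse (norm q) * (h \<bullet> sgn q) * inverse (norm q))) *\<^sub>R q)) (at q)"
    using has_derivative_scaleR[OF i has_derivative_ident] by simp
  then show ?thesis using assms unfolding tsigma_def[abs_def] 
    by (simp add: sgn_div_norm inner_commute)
qed

lemma E_inner: "g \<bullet> (\<chi> i. if i = k then v else 0) = (g$k) \<bullet> (v::real^3)"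
  for g :: "real^3^4"
  by (simp add: inner_vec_def if_distrib cong: if_cong)

lemma triple1: "cross3 v b \<bullet> c = v \<bullet> cross3 b c" by (simp add: cross3_simps)
lemma triple2: "cross3 a v \<bullet> c = v \<bullet> cross3 c a" by (simp add: cross3_simps)

lemma cross_mult_ex:
  fixes u w :: "real^3"
  assumes "u \<noteq> 0" "cross3 u w = 0"
  shows "\<exists>t. w = t *\<^sub>R u"
proof -
  have "collinear {0, u, w}" using assms(2) cross_eq_0 by blast
  then have "u = 0 \<or> w = 0 \<or> (\<exists>t. w = t *\<^sub>R u)" using collinear_lemma by blast
  then show ?thesis using assms(1) by (metis scale_zero_left)
qed

theorem mainTheorem6:
  fixes p g :: "real^3^4" and D\<pi> :: "real^3^4 \<Rightarrow> real^3^4"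
  assumes "p \<in> tN"
    and "(tvol has_derivative (\<lambda>h. g \<bullet> h)) (at p)"
    and "(tpi has_derivative D\<pi>) (at p)"
    and "D\<pi> g = 0"
    and "\<not> collinear {p$1, p$2, p$3, p$4}"
  shows "regular_tetrahedron p"
proof -
  have p4: "p$4 = 0" and pn: "norm p = 1" using assms(1) unfolding tN_def by auto
  have tp: "ttau p = p"
    unfolding ttau_def vec_eq_iff using p4 by (auto simp: forall_4)
  have "(tpi has_derivative (\<lambda>h. ttau h - (p \<bullet> ttau h) *\<^sub>R p)) (at p)"
  proof -
    have "((tsigma \<circ> ttau) has_derivative ((\<lambda>h. h - (p \<bullet> h) *\<^sub>R p) \<circ> ttau)) (at p)"
      using diff_chain_at[OF bounded_linear_imp_has_derivative[OF ttau_lin], of tsigma]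
        tsigma_deriv[OF pn] tp by simp
    then show ?thesis unfolding tpi_def by (simp add: o_def)
  qed
  then have "D\<pi> = (\<lambda>h. ttau h - (p \<bullet> ttau h) *\<^sub>R p)"
    using has_derivative_unique[OF assms(3)] by blast
  then have tg: "ttau g = (p \<bullet> ttau g) *\<^sub>R p" using assms(4) by simp
  define c where "c = p \<bullet> ttau g"
  define x1 where "x1 = p$1"
  define x2 where "x2 = p$2"
  define x3 where "x3 = p$3"
  define x4 where "x4 = p$4"
  define y1 where "y1 = g$1"
  define y2 where "y2 = g$2"
  define y3 where "y3 = g$3"
  define y4 where "y4 = g$4"
  have e1: "y1 - y4 = c *\<^sub>R x1" using arg_cong[OF tg, of "\<lambda>v. v$1"]
    unfolding c_def x1_def y1_def y4_def ttau_def by simp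
  have e2: "y2 - y4 = c *\<^sub>R x2" using arg_cong[OF tg, of "\<lambda>v. v$2"]
    unfolding c_def x2_def y2_def y4_def ttau_def by simp
  have e3: "y3 - y4 = c *\<^sub>R x3" using arg_cong[OF tg, of "\<lambda>v. v$3"]
    unfolding c_def x3_def y3_def y4_def ttau_def by simp
  have x40: "x4 = 0" using p4 x4_def by simp
  let ?a = "x2 - x1" let ?b = "x3 - x1" let ?c = "x4 - x1"
  have L: "\<And>h. g \<bullet> h = (1/6) * ((cross3 (h$2-h$1) (p$3-p$1) + cross3 (p$2-p$1) (h$3-h$1)) \<bullet> (p$4-p$1) + cross3 (p$2-p$1) (p$3-p$1) \<bullet> (h$4-h$1))"
    using has_derivative_unique[OF assms(2) tvol_deriv] by metis
  have g2: "\<And>v. y2 \<bullet> v = (1/6) * (cross3 v ?b \<bullet> ?c)"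
    using L[of "\<chi> i. if i = 2 then v else 0" for v]
    unfolding E_inner by (simp add: x1_def x2_def x3_def x4_def y2_def)
  have g3: "\<And>v. y3 \<bullet> v = (1/6) * (cross3 ?a v \<bullet> ?c)"
    using L[of "\<chi> i. if i = 3 then v else 0" for v]
    unfolding E_inner by (simp add: x1_def x2_def x3_def x4_def y3_def)
  have g4: "\<And>v. y4 \<bullet> v = (1/6) * (cross3 ?a ?b \<bullet> v)"
    using L[of "\<chi> i. if i = 4 then v else 0" for v]
    unfolding E_inner by (simp add: x1_def x2_def x3_def x4_def y4_def)
  have g1: "\<And>v. y1 \<bullet> v = (1/6) * (cross3 (-v) ?b \<bullet> ?c + cross3 ?a (-v) \<bullet> ?c + cross3 ?a ?b \<bullet> (-v))"
    using L[of "\<chi> i. if i = 1 then v else 0" for v]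
    unfolding E_inner by (simp add: x1_def x2_def x3_def x4_def y1_def algebra_simps)
  have sum0: "y1 + y2 + y3 + y4 = 0"
  proof -
    have "\<And>v. (y1 + y2 + y3 + y4) \<bullet> v = 0"
      by (simp add: inner_add_left g1 g2 g3 g4 cross_minus_left cross_minus_right algebra_simps)
    from this[of "y1 + y2 + y3 + y4"] show ?thesis by simp
  qed
  have o1: "y1 \<bullet> (x3 - x2) = 0" "y1 \<bullet> (x4 - x2) = 0"
    by (simp_all only: g1, simp_all add: cross3_simps)
  have o2: "y2 \<bullet> (x3 - x1) = 0" "y2 \<bullet> (x4 - x1) = 0"
    by (simp_all only: g2, simp_all add: cross3_simps)
  have o3: "y3 \<bullet> (x2 - x1) = 0" "y3 \<bullet> (x4 - x1) = 0"
    by (simp_all only: g3, simp_all add: cross3_simps)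
  have o4: "y4 \<bullet> (x2 - x1) = 0" "y4 \<bullet> (x3 - x1) = 0"
    by (simp_all only: g4, simp_all add: cross3_simps)
  have y1e: "y1 = y4 + c *\<^sub>R x1" using e1 by (simp add: algebra_simps)
  have y2e: "y2 = y4 + c *\<^sub>R x2" using e2 by (simp add: algebra_simps)
  have y3e: "y3 = y4 + c *\<^sub>R x3" using e3 by (simp add: algebra_simps)
  define m where "m = (1/4) *\<^sub>R (x1 + x2 + x3 + x4)"
  define q1 where "q1 = x1 - m"
  define q2 where "q2 = x2 - m"
  define q3 where "q3 = x3 - m"
  define q4 where "q4 = x4 - m"
  have y4q: "y4 = c *\<^sub>R q4"
  proof -
    have "y4$k = (c *\<^sub>R q4)$k" for k
    proof -
      have "(y1+y2+y3+y4)$k = 0" using sum0 by simp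
      then have h: "y1$k+y2$k+y3$k+y4$k = 0" by simp
      have "y1$k = y4$k + c * x1$k" "y2$k = y4$k + c * x2$k" "y3$k = y4$k + c * x3$k"
        using y1e y2e y3e by simp_all
      then show ?thesis using h unfolding q4_def m_def x40 by (simp add: algebra_simps)
    qed
    then show ?thesis by (simp add: vec_eq_iff)
  qed
  have y1q: "y1 = c *\<^sub>R q1" unfolding y1e y4q q1_def q4_def x40 by (simp add: algebra_simps)
  have y2q: "y2 = c *\<^sub>R q2" unfolding y2e y4q q2_def q4_def x40 by (simp add: algebra_simps)
  have y3q: "y3 = c *\<^sub>R q3" unfolding y3e y4q q3_def q4_def x40 by (simp add: algebra_simps)
  show ?thesis
  proof (cases "c = 0")
    case True
    then have z: "y2 = 0" "y3 = 0" "y4 = 0" using y2q y3q y4q by auto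
    have cab: "cross3 ?a ?b = 0" using g4[of "cross3 ?a ?b"] z by simp
    have "y2 \<bullet> cross3 ?b ?c = (1/6) * (cross3 ?b ?c \<bullet> cross3 ?b ?c)"
      unfolding g2 triple1 ..
    then have cbc: "cross3 ?b ?c = 0" using z by simp
    have "y3 \<bullet> cross3 ?c ?a = (1/6) * (cross3 ?c ?a \<bullet> cross3 ?c ?a)"
      unfolding g3 triple2 ..
    then have cca: "cross3 ?c ?a = 0" using z by simp
    have cac: "cross3 ?a ?c = 0" using cca cross_skew[of ?a ?c] by simp
    have "collinear {x1, x2, x3, x4}"
    proof -
      have "\<exists>v. \<exists>t2 t3 t4. x2 = x1 + t2 *\<^sub>R v \<and> x3 = x1 + t3 *\<^sub>R v \<and> x4 = x1 + t4 *\<^sub>R v"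
      proof (cases "?a = 0")
        case False
        obtain t where t: "?b = t *\<^sub>R ?a" using cross_mult_ex[OF False cab] by blast
        obtain s where s: "?c = s *\<^sub>R ?a" using cross_mult_ex[OF False cac] by blast
        show ?thesis
          apply (rule exI[of _ ?a], rule exI[of _ 1], rule exI[of _ t], rule exI[of _ s])
          using t s by (simp add: algebra_simps)
      next
        case a0: True
        show ?thesis
        proof (cases "?b = 0")
          case False
          obtain s where s: "?c = s *\<^sub>R ?b" using cross_mult_ex[OF False cbc] by blast
          show ?thesis
            apply (rule exI[of _ ?b], rule exI[of _ 0], rule exI[of _ 1], rule exI[of _ s])
            using a0 s by (simp add: algebra_simps)
        next
          case True
          show ?thesis
            apply (rule exI[of _ ?c], rule exI[of _ 0], rule exI[of _ 0], rule exI[of _ 1])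
            using a0 True by (simp add: algebra_simps)
        qed
      qed
      then obtain v t2 t3 t4 where "x2 = x1 + t2 *\<^sub>R v" "x3 = x1 + t3 *\<^sub>R v" "x4 = x1 + t4 *\<^sub>R v"
        by blast
      then have "\<forall>x\<in>{x1, x2, x3, x4}. \<exists>c. x = x1 + c *\<^sub>R v"
        by (metis add_0_right empty_iff insert_iff scale_zero_left)
      then show ?thesis unfolding collinear_alt by blast
    qed
    then show ?thesis using assms(5) unfolding x1_def x2_def x3_def x4_def by simp
  next
    case False
    have oq: "\<And>q v. y = c *\<^sub>R q \<Longrightarrow> y \<bullet> v = 0 \<Longrightarrow> q \<bullet> v = 0" for y
      using False by simp
    have dq: "x3 - x2 = q3 - q2" "x4 - x2 = q4 - q2" "x3 - x1 = q3 - q1" "x4 - x1 = q4 - q1"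
      "x2 - x1 = q2 - q1"
      unfolding q1_def q2_def q3_def q4_def by simp_all
    have r1: "q1 \<bullet> (q3 - q2) = 0" "q1 \<bullet> (q4 - q2) = 0"
      using oq[OF y1q] o1 dq by simp_all
    have r2: "q2 \<bullet> (q3 - q1) = 0" "q2 \<bullet> (q4 - q1) = 0"
      using oq[OF y2q] o2 dq by simp_all
    have r3: "q3 \<bullet> (q2 - q1) = 0" "q3 \<bullet> (q4 - q1) = 0"
      using oq[OF y3q] o3 dq by simp_all
    have r4: "q4 \<bullet> (q2 - q1) = 0" "q4 \<bullet> (q3 - q1) = 0"
      using oq[OF y4q] o4 dq by simp_all
    have qs: "q1 + q2 + q3 + q4 = 0" unfolding q1_def q2_def q3_def q4_def m_def
      by (simp add: vec_eq_iff field_simps)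
    have s1: "q1 \<bullet> (q1 + q2 + q3 + q4) = 0" "q2 \<bullet> (q1 + q2 + q3 + q4) = 0"
      "q3 \<bullet> (q1 + q2 + q3 + q4) = 0" "q4 \<bullet> (q1 + q2 + q3 + q4) = 0"
      using qs by simp_all
    have sym: "q2 \<bullet> q1 = q1 \<bullet> q2" "q3 \<bullet> q1 = q1 \<bullet> q3" "q4 \<bullet> q1 = q1 \<bullet> q4"
      "q3 \<bullet> q2 = q2 \<bullet> q3" "q4 \<bullet> q2 = q2 \<bullet> q4" "q4 \<bullet> q3 = q3 \<bullet> q4"
      by (simp_all add: inner_commute)
    note R = r1 r2 r3 r4 s1
    note R' = R[unfolded inner_diff_right inner_add_right sym]
    define K where "K = -8 * (q1 \<bullet> q2)"
    have dd: "\<And>u v. (dist (u - m) (v - m))\<^sup>2 = (u - m) \<bullet> (u - m) + (v - m) \<bullet> (v - m) - 2 * ((u - m) \<bullet> (v - m))"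
      by (simp add: dist_norm power2_norm_eq_inner inner_diff_left inner_diff_right inner_commute)
    have dqq: "\<And>u v. dist u v = dist (u - m) (v - m)" by (simp add: dist_norm)
    have D12: "(dist (p$1) (p$2))\<^sup>2 = K"
    proof -
      have "(dist x1 x2)\<^sup>2 = q1 \<bullet> q1 + q2 \<bullet> q2 - 2 * (q1 \<bullet> q2)"
        using dd[of x1 x2] dqq[of x1 x2] unfolding q1_def q2_def by simp
      then have "(dist x1 x2)\<^sup>2 = K" using R' unfolding K_def by linarith
      then show ?thesis unfolding x1_def x2_def .
    qed
    have D13: "(dist (p$1) (p$3))\<^sup>2 = K"
    proof -
      have "(dist x1 x3)\<^sup>2 = q1 \<bullet> q1 + q3 \<bullet> q3 - 2 * (q1 \<bullet> q3)"
        using dd[of x1 x3] dqq[of x1 x3] unfolding q1_def q3_def by simp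
      then have "(dist x1 x3)\<^sup>2 = K" using R' unfolding K_def by linarith
      then show ?thesis unfolding x1_def x3_def .
    qed
    have D14: "(dist (p$1) (p$4))\<^sup>2 = K"
    proof -
      have "(dist x1 x4)\<^sup>2 = q1 \<bullet> q1 + q4 \<bullet> q4 - 2 * (q1 \<bullet> q4)"
        using dd[of x1 x4] dqq[of x1 x4] unfolding q1_def q4_def by simp
      then have "(dist x1 x4)\<^sup>2 = K" using R' unfolding K_def by linarith
      then show ?thesis unfolding x1_def x4_def .
    qed
    have D23: "(dist (p$2) (p$3))\<^sup>2 = K"
    proof -
      have "(dist x2 x3)\<^sup>2 = q2 \<bullet> q2 + q3 \<bullet> q3 - 2 * (q2 \<bullet> q3)"
        using dd[of x2 x3] dqq[of x2 x3] unfolding q2_def q3_def by simp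
      then have "(dist x2 x3)\<^sup>2 = K" using R' unfolding K_def by linarith
      then show ?thesis unfolding x2_def x3_def .
    qed
    have D24: "(dist (p$2) (p$4))\<^sup>2 = K"
    proof -
      have "(dist x2 x4)\<^sup>2 = q2 \<bullet> q2 + q4 \<bullet> q4 - 2 * (q2 \<bullet> q4)"
        using dd[of x2 x4] dqq[of x2 x4] unfolding q2_def q4_def by simp
      then have "(dist x2 x4)\<^sup>2 = K" using R' unfolding K_def by linarith
      then show ?thesis unfolding x2_def x4_def .
    qed
    have D34: "(dist (p$3) (p$4))\<^sup>2 = K"
    proof -
      have "(dist x3 x4)\<^sup>2 = q3 \<bullet> q3 + q4 \<bullet> q4 - 2 * (q3 \<bullet> q4)"
        using dd[of x3 x4] dqq[of x3 x4] unfolding q3_def q4_def by simp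
      then have "(dist x3 x4)\<^sup>2 = K" using R' unfolding K_def by linarith
      then show ?thesis unfolding x3_def x4_def .
    qed
    have DD: "\<And>i j. i \<noteq> j \<Longrightarrow> (dist (p$i) (p$j))\<^sup>2 = K"
    proof -
      fix i j :: 4 assume "i \<noteq> j"
      then show "(dist (p$i) (p$j))\<^sup>2 = K"
        using exhaust_4[of i] exhaust_4[of j] D12 D13 D14 D23 D24 D34
        by (auto simp: dist_commute)
    qed
    show ?thesis unfolding regular_tetrahedron_def
    proof (intro allI impI)
      fix i j k l :: 4 assume "i \<noteq> j" "k \<noteq> l"
      then have "(dist (p$i) (p$j))\<^sup>2 = (dist (p$k) (p$l))\<^sup>2" using DD by simp
      then show "dist (p$i) (p$j) = dist (p$k) (p$l)"
        using power2_eq_imp_eq zero_le_dist by blast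
    qed
  qed
qed
end
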